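(* Let $\lambda\in\mathbb{R}$ and let $\mu$ be a (nonzero, finite, positive) measure on $\mathbb{R}$ with support contained in $(-\infty,\lambda]$. Then $l\mapsto-\frac{1}{s_\mu(l)}$ is convex on $(\lambda,\infty)$, where $s_\mu(l)=\int\frac{1}{l-x}\mu(dx)$. If the support of $\mu$ is not a singleton, this map is strictly convex.
   Context: $s_\mu$ is the Stieltjes transform of $\mu$, defined for $l$ outside the support of $\mu$. *)

theory Defs
  imports "HOL-Probability.Probability"
begin

definition measure_support :: "real measure \<Rightarrow> real set" where
  "measure_support M = {x. \<forall>e>0. emeasure M (ball x e) > 0}"

definition stieltjes :: "real measure \<Rightarrow> real \<Rightarrow> real" where
  "stieltjes M l = (\<integral>x. 1 / (l - x) \<partial>M)"

definition strict_convex_on :: "real set \<Rightarrow> (real \<Rightarrow> real) \<Rightarrow> bool" where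
  "strict_convex_on S f \<longleftrightarrow>
     (\<forall>x\<in>S. \<forall>y\<in>S. \<forall>t::real. x \<noteq> y \<longrightarrow> 0 < t \<longrightarrow> t < 1 \<longrightarrow>
        f ((1 - t) * x + t * y) < (1 - t) * f x + t * f y)"

end

theory Submission
  imports Defs
begin

lemma AE_False_imp:
  assumes "AE x in M. False" shows "emeasure M (space M) = 0"
  using assms ae_filter_eq_bot_iff trivial_limit_def by metis

lemma pos_int:
  fixes f :: "'a \<Rightarrow> real"
  assumes "integrable M f" "AE x in M. f x > 0" "emeasure M (space M) \<noteq> 0"
  shows "integral\<^sup>L M f > 0"
proof -
  have nn: "AE x in M. 0 \<le> f x" using assms(2) by eventually_elim auto
  have "integral\<^sup>L M f \<ge> 0" using integral_nonneg_AE[OF nn] .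
  moreover have "integral\<^sup>L M f \<noteq> 0"
  proof
    assume "integral\<^sup>L M f = 0"
    then have "AE x in M. f x = 0" using integral_nonneg_eq_0_iff_AE[OF assms(1) nn] by simp
    with assms(2) have "AE x in M. False" by eventually_elim auto
    then show False using AE_False_imp assms(3) by blast
  qed
  ultimately show ?thesis by simp
qed

lemma AE_le:
  fixes M :: "real measure"
  assumes sets: "sets M = sets borel" and supp: "measure_support M \<subseteq> {..lam}"
  shows "AE x in M. x \<le> lam"
proof -
  define F where "F = {ball y e | y e. e > 0 \<and> emeasure M (ball y e) = 0}"
  have cover: "{lam<..} \<subseteq> \<Union>F"
  proof
    fix y assume "y \<in> {lam<..}"
    then have "y \<notin> measure_support M" using supp by auto
    then obtain e where "e > 0" "\<not> emeasure M (ball y e) > 0" unfolding measure_support_def by auto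
    then have "ball y e \<in> F" unfolding F_def by (auto simp: zero_less_iff_neq_zero)
    then show "y \<in> \<Union>F" using \<open>e > 0\<close> by (meson UnionI centre_in_ball)
  qed
  obtain F' where F': "F' \<subseteq> F" "countable F'" "\<Union>F' = \<Union>F"
    using Lindelof[of F] unfolding F_def by auto
  have "(\<Union>S\<in>F'. S) \<in> null_sets M"
  proof (rule null_sets_UN'[OF F'(2)])
    fix S assume "S \<in> F'"
    then have "S \<in> F" using F' by auto
    then obtain y e where "S = ball y e" "emeasure M (ball y e) = 0" unfolding F_def by auto
    moreover have "ball y e \<in> sets M" using sets by simp
    ultimately show "S \<in> null_sets M" by auto
  qed
  then show ?thesis
    by (rule AE_I') (use cover F'(3) in auto)
qed

lemma meas: "f \<in> borel_measurable borel \<Longrightarrow> sets M = sets borel \<Longrightarrow> f \<in> borel_measurable M"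
  using measurable_cong_sets by blast

lemma intg:
  fixes M :: "real measure" and f :: "real \<Rightarrow> real"
  assumes "finite_measure M" "sets M = sets borel" "f \<in> borel_measurable borel"
    "AE x in M. \<bar>f x\<bar> \<le> B"
  shows "integrable M f"
  using finite_measure.integrable_const_bound[OF assms(1), of f B] assms meas[of f M] by auto

lemma aux1: "(d::real) \<noteq> 0 \<Longrightarrow> (a - d)*(1/d)^2 + 1/d = a/d^2"
  by (simp add: field_simps power2_eq_square)

lemma imr: "integrable M f \<Longrightarrow> integrable M (\<lambda>x. (c::real) * f x)"
  by simp

lemma aux2: "(c::real) > 0 \<Longrightarrow> a > 0 \<Longrightarrow> d > 0 \<Longrightarrow>
  c*((a-d)*(1/d)^2 + 1/d) + (1/c)*(1/a) - 2*(1/d) = (c*a/d - 1)^2/(c*a)"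
proof -
  assume h: "c > 0" "a > 0" "d > 0"
  have "c*((a-d)*(1/d)^2 + 1/d) = c*a/d^2" using aux1[of d a] h by simp
  moreover have "(c*a/d - 1)^2/(c*a) = c*a/d^2 - 2/d + 1/(c*a)" using h
    by (simp add: power2_eq_square field_simps)
  ultimately show ?thesis by simp
qed

lemma key:
  fixes M :: "real measure" and lam l m :: real
  assumes fin: "finite_measure M" and sets: "sets M = sets borel"
    and nz: "emeasure M (space M) \<noteq> 0"
    and ae: "AE x in M. x \<le> lam" and l: "lam < l" and m: "lam < m"
  defines "S \<equiv> \<integral>x. 1/(m-x) \<partial>M" and "T \<equiv> \<integral>x. (1/(m-x))^2 \<partial>M"
    and "B \<equiv> \<integral>x. 1/(l-x) \<partial>M"
  shows "S > 0" "B > 0" "(l-m)*T + S > 0" "S^2 \<le> ((l-m)*T + S) * B"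
    "S^2 = ((l-m)*T + S)*B \<Longrightarrow> l \<noteq> m \<Longrightarrow> \<exists>x0. AE x in M. x = x0"
proof -
  have iS: "integrable M (\<lambda>x. 1/(m-x))"
    by (rule intg[OF fin sets, where B="1/(m-lam)"], measurable)
       (rule eventually_mono[OF ae], use m in \<open>auto simp: frac_le\<close>)
  have iT: "integrable M (\<lambda>x. (1/(m-x))^2)"
    by (rule intg[OF fin sets, where B="(1/(m-lam))^2"], measurable)
       (rule eventually_mono[OF ae], use m in \<open>auto intro!: power_mono simp: frac_le\<close>)
  have iB: "integrable M (\<lambda>x. 1/(l-x))"
    by (rule intg[OF fin sets, where B="1/(l-lam)"], measurable)
       (rule eventually_mono[OF ae], use l in \<open>auto simp: frac_le\<close>)
  show Sp: "S > 0" unfolding S_def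
    by (rule pos_int[OF iS _ nz]) (rule eventually_mono[OF ae], use m in \<open>auto\<close>)
  show Bp: "B > 0" unfolding B_def
    by (rule pos_int[OF iB _ nz]) (rule eventually_mono[OF ae], use l in \<open>auto\<close>)
  define A where "A = (l-m)*T + S"
  have iA: "integrable M (\<lambda>x. (l-m)*(1/(m-x))^2 + 1/(m-x))" using iS iT by auto
  have A_eq: "A = \<integral>x. (l-m)*(1/(m-x))^2 + 1/(m-x) \<partial>M"
    unfolding A_def S_def T_def using iS iT by simp
  have Ap: "A > 0" unfolding A_eq
  proof (rule pos_int[OF iA _ nz])
    show "AE x in M. 0 < (l-m)*(1/(m-x))^2 + 1/(m-x)"
    proof (use ae in eventually_elim)
      case (elim x)
      then have mx: "m - x \<noteq> 0" using m by auto
      have "(l-m)*(1/(m-x))^2 + 1/(m-x) = (l-x)/(m-x)^2"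
        using aux1[OF mx, of "l-x"] by simp
      then show ?case using elim l m by simp
    qed
  qed
  then show "(l-m)*T + S > 0" unfolding A_def .
  define c where "c = S / A"
  have cp: "c > 0" unfolding c_def using Sp Ap by simp
  define g where "g = (\<lambda>x. c*((l-m)*(1/(m-x))^2 + 1/(m-x)) + (1/c)*(1/(l-x)) - 2*(1/(m-x)))"
  have ig: "integrable M g" unfolding g_def using iA iB iS
    by (intro Bochner_Integration.integrable_diff Bochner_Integration.integrable_add imr iA iB iS)
  have int_g: "integral\<^sup>L M g = c*A + B/c - 2*S"
    unfolding g_def A_eq B_def S_def using iA iB iS
    by (simp only: Bochner_Integration.integral_diff[OF Bochner_Integration.integrable_add[OF imr[OF iA] imr[OF iB]] imr[OF iS]]
       Bochner_Integration.integral_add[OF imr[OF iA] imr[OF iB]] integral_mult_right_zero) simp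
  also have "\<dots> = (A*B - S^2)/S" unfolding c_def using Sp Ap
    by (simp add: field_simps power2_eq_square)
  finally have int_g2: "integral\<^sup>L M g = (A*B - S^2)/S" .
  have g_form: "AE x in M. g x = (c*(l-x)/(m-x) - 1)^2 / (c*(l-x))"
  proof (use ae in eventually_elim)
    case (elim x)
    then have "m - x > 0" "l - x > 0" using l m by auto
    then show ?case unfolding g_def using cp aux2[of c "l-x" "m-x"] by simp
  qed
  have gnn: "AE x in M. 0 \<le> g x"
    using g_form ae
  proof eventually_elim
    case (elim x) then show ?case using cp l by simp
  qed
  have "integral\<^sup>L M g \<ge> 0" using integral_nonneg_AE[OF gnn] .
  then have "(A*B - S^2)/S \<ge> 0" using int_g2 by simp
  then have "A*B - S^2 \<ge> 0" using Sp by (simp add: zero_le_divide_iff)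
  then show "S^2 \<le> ((l-m)*T + S) * B" unfolding A_def[symmetric] by linarith
  assume eq: "S^2 = ((l-m)*T + S)*B" and lm: "l \<noteq> m"
  then have "integral\<^sup>L M g = 0" using int_g2 unfolding A_def by (simp add: mult.commute)
  then have "AE x in M. g x = 0" using integral_nonneg_eq_0_iff_AE[OF ig gnn] by simp
  then have "AE x in M. x = (c*l - m)/(c - 1)"
    using g_form ae
  proof eventually_elim
    case (elim x)
    then have "m - x > 0" "l - x > 0" using l m by auto
    from elim have "(c*(l-x)/(m-x) - 1)^2 = 0" using cp \<open>l - x > 0\<close> by simp
    then have "c*(l-x) = m - x" using \<open>m - x > 0\<close> by (simp add: field_simps)
    moreover have "c \<noteq> 1" using calculation lm by auto
    ultimately show ?case by (simp add: field_simps)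
  qed
  then show "\<exists>x0. AE x in M. x = x0" by blast
qed

lemma supp_single:
  fixes M :: "real measure"
  assumes sets: "sets M = sets borel" and nz: "emeasure M (space M) \<noteq> 0"
    and ae: "AE x in M. x = x0"
  shows "measure_support M = {x0}"
proof -
  have sp: "space M = UNIV" using sets_eq_imp_space_eq[OF sets] by simp
  have "y \<in> measure_support M \<longleftrightarrow> y = x0" for y
  proof
    assume "y = x0"
    show "y \<in> measure_support M" unfolding measure_support_def
    proof (intro CollectI allI impI)
      fix e :: real assume "e > 0"
      have "emeasure M (ball y e) = emeasure M (space M)"
        by (rule emeasure_eq_AE) (use ae \<open>y = x0\<close> \<open>e > 0\<close> sets sp in \<open>auto elim!: eventually_mono\<close>)
      then show "emeasure M (ball y e) > 0" using nz by (simp add: zero_less_iff_neq_zero)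
    qed
  next
    assume "y \<in> measure_support M"
    show "y = x0"
    proof (rule ccontr)
      assume ne: "y \<noteq> x0"
      then have ep: "dist y x0 > 0" by simp
      have "emeasure M (ball y (dist y x0)) = emeasure M {}"
        by (rule emeasure_eq_AE) (use ae sets in \<open>auto elim!: eventually_mono\<close>)
      then have "\<not> emeasure M (ball y (dist y x0)) > 0" by simp
      moreover have "\<forall>e>0. emeasure M (ball y e) > 0"
        using \<open>y \<in> measure_support M\<close> unfolding measure_support_def by simp
      ultimately show False using ep by blast
    qed
  qed
  then show ?thesis by auto
qed

theorem lemma3p2:
  fixes M :: "real measure" and lam :: real
  assumes "sets M = sets borel"
    and "finite_measure M"
    and "emeasure M (space M) \<noteq> 0"
    and "measure_support M \<subseteq> {..lam}"
  shows "convex_on {lam<..} (\<lambda>l. - 1 / stieltjes M l) \<and>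
         ((\<nexists>a. measure_support M = {a}) \<longrightarrow>
           strict_convex_on {lam<..} (\<lambda>l. - 1 / stieltjes M l))"
proof -
  note sets = assms(1) and fin = assms(2) and nz = assms(3)
  have ae: "AE x in M. x \<le> lam" using AE_le[OF sets assms(4)] .
  have main: "- 1 / stieltjes M ((1 - t) * l1 + t * l2)
      \<le> (1 - t) * (- 1 / stieltjes M l1) + t * (- 1 / stieltjes M l2)
     \<and> ((\<nexists>a. measure_support M = {a}) \<longrightarrow> l1 \<noteq> l2 \<longrightarrow> 0 < t \<longrightarrow> t < 1 \<longrightarrow>
       - 1 / stieltjes M ((1 - t) * l1 + t * l2)
      < (1 - t) * (- 1 / stieltjes M l1) + t * (- 1 / stieltjes M l2))"
    if l1: "lam < l1" and l2: "lam < l2" and t0: "0 \<le> t" and t1: "t \<le> 1" for l1 l2 t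
  proof -
    define m where "m = (1 - t) * l1 + t * l2"
    have mlam: "lam < m"
    proof -
      have "(1-t)*lam + t*lam \<le> (1-t)*l1 + t*l2" using l1 l2 t0 t1
        by (intro add_mono mult_left_mono) auto
      moreover have "(1-t)*lam + t*lam < (1-t)*l1 + t*l2 \<or> True" by simp
      have "lam < (1-t)*l1 + t*l2"
      proof (cases "t = 0")
        case True then show ?thesis using l1 by simp
      next
        case False
        then have "t*lam < t*l2" using t0 l2 by simp
        moreover have "(1-t)*lam \<le> (1-t)*l1" using t1 l1 by (intro mult_left_mono) auto
        ultimately show ?thesis by (simp add: algebra_simps) 
      qed
      then show ?thesis unfolding m_def .
    qed
    define S where "S = (\<integral>x. 1/(m-x) \<partial>M)"
    define T where "T = (\<integral>x. (1/(m-x))^2 \<partial>M)"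
    define B1 where "B1 = (\<integral>x. 1/(l1-x) \<partial>M)"
    define B2 where "B2 = (\<integral>x. 1/(l2-x) \<partial>M)"
    define A1 where "A1 = (l1-m)*T + S"
    define A2 where "A2 = (l2-m)*T + S"
    note k1 = key[OF fin sets nz ae l1 mlam, folded S_def T_def B1_def A1_def]
    note k2 = key[OF fin sets nz ae l2 mlam, folded S_def T_def B2_def A2_def]
    have Sp: "S > 0" and B1p: "B1 > 0" and B2p: "B2 > 0" and A1p: "A1 > 0" and A2p: "A2 > 0"
      using k1 k2 unfolding A1_def A2_def by auto
    have sum: "(1-t)*A1 + t*A2 = S" unfolding A1_def A2_def m_def
      by (simp add: algebra_simps)
    have i1: "1/B1 \<le> A1/S^2" using k1(4)[folded A1_def] Sp B1p by (simp add: field_simps)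
    have i2: "1/B2 \<le> A2/S^2" using k2(4)[folded A2_def] Sp B2p by (simp add: field_simps)
    have "(1-t)*(1/B1) + t*(1/B2) \<le> (1-t)*(A1/S^2) + t*(A2/S^2)"
      using i1 i2 t0 t1 by (intro add_mono mult_left_mono) auto
    also have "\<dots> = ((1-t)*A1 + t*A2)/S^2" by (simp add: add_divide_distrib)
    also have "\<dots> = 1/S" using sum Sp by (simp add: power2_eq_square)
    finally have le: "(1-t)*(1/B1) + t*(1/B2) \<le> 1/S" .
    have st: "stieltjes M m = S" "stieltjes M l1 = B1" "stieltjes M l2 = B2"
      unfolding stieltjes_def S_def B1_def B2_def by auto
    show ?thesis
    proof
      show "- 1 / stieltjes M ((1 - t) * l1 + t * l2)
          \<le> (1 - t) * (- 1 / stieltjes M l1) + t * (- 1 / stieltjes M l2)"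
        using le unfolding m_def[symmetric] st by simp
    next
      show "(\<nexists>a. measure_support M = {a}) \<longrightarrow> l1 \<noteq> l2 \<longrightarrow> 0 < t \<longrightarrow> t < 1 \<longrightarrow>
       - 1 / stieltjes M ((1 - t) * l1 + t * l2)
      < (1 - t) * (- 1 / stieltjes M l1) + t * (- 1 / stieltjes M l2)"
      proof (intro impI)
        assume ns: "\<nexists>a. measure_support M = {a}" and ne: "l1 \<noteq> l2" and tp: "0 < t" and tl: "t < 1"
        have lm: "l1 \<noteq> m"
        proof
          assume "l1 = m"
          then have "t * (l2 - l1) = 0" unfolding m_def by (auto simp: algebra_simps)
          then show False using tp ne by simp
        qed
        have "S^2 \<noteq> A1 * B1"
        proof
          assume "S^2 = A1 * B1"
          then obtain x0 where "AE x in M. x = x0" using k1(5) lm unfolding A1_def by auto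
          then show False using supp_single[OF sets nz] ns by blast
        qed
        then have "S^2 < A1 * B1" using k1(4) unfolding A1_def by simp
        then have "1/B1 < A1/S^2" using Sp B1p by (simp add: field_simps)
        then have "(1-t)*(1/B1) + t*(1/B2) < (1-t)*(A1/S^2) + t*(A2/S^2)"
          using i2 tp tl by (intro add_less_le_mono mult_strict_left_mono mult_left_mono) auto
        also have "\<dots> = ((1-t)*A1 + t*A2)/S^2" by (simp add: add_divide_distrib)
        also have "\<dots> = 1/S" using sum Sp by (simp add: power2_eq_square)
        finally have "(1-t)*(1/B1) + t*(1/B2) < 1/S" .
        then show "- 1 / stieltjes M ((1 - t) * l1 + t * l2)
          < (1 - t) * (- 1 / stieltjes M l1) + t * (- 1 / stieltjes M l2)"
          unfolding m_def[symmetric] st by simp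
      qed
    qed
  qed
  show ?thesis
  proof
    show "convex_on {lam<..} (\<lambda>l. - 1 / stieltjes M l)"
      by (rule convex_onI) (use main in auto)
  next
    show "(\<nexists>a. measure_support M = {a}) \<longrightarrow> strict_convex_on {lam<..} (\<lambda>l. - 1 / stieltjes M l)"
      unfolding strict_convex_on_def using main by auto
  qed
qed

end
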